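(* Let $D$ be a Dedekind domain with quotient field $K$, let $I$ be a finite non-empty index set, let $f_i\in D[x]$ be irreducible in $K[x]$ for each $i\in I$, and let $c$ be a non-unit of $D$ with $\mathsf{d}\bigl(\prod_{i\in I}f_i\bigr)=cD$. Put $f=\frac{1}{c}\prod_{i\in I}f_i\in\operatorname{Int}(D)$, and let $\mathcal{P}$ be the finite set of maximal ideals of $D$ containing $c$. Suppose that for each $P\in\mathcal{P}$, $\Lambda_P\subseteq I$ is a subset such that $f_i$ is indispensable for $P$ (among the polynomials $f_i$, $i\in I$) for every $i\in\Lambda_P$, and let $\Lambda=\bigcup_{P\in\mathcal{P}}\Lambda_P$. If $\bigcap_{P\in\mathcal{P}}\Lambda_P\neq\emptyset$, then all essentially different factorizations of $f$ into irreducibles in $\operatorname{Int}(D)$ are given by \[\frac{\prod_{i\in\Lambda\cup J_1}f_i}{c}\cdot\prod_{j\in J_2}f_j\] (each $f_j$, $j\in J_2$, counted as an individual factor), where $I=\Lambda\uplus J_1\uplus J_2$ and $J_1$ is minimal (with respect to inclusion) such that $\mathsf{d}\bigl(\prod_{i\in\Lambda\cup J_1}f_i\bigr)=cD$. That is, each such expression is a factorization of $f$ into irreducibles of $\operatorname{Int}(D)$, and every factorization of $f$ into irreducibles of $\operatorname{Int}(D)$ is essentially the same as one of them.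
   Context: $\operatorname{Int}(D)=\{h\in K[x]\mid h(D)\subseteq D\}$. For $g\in D[x]$, the fixed divisor $\mathsf{d}(g)$ is the ideal of $D$ generated by $\{g(a)\mid a\in D\}$. For a maximal ideal $P$, $\mathsf{v}_P$ is the $P$-adic valuation. Given polynomials $f_i\in D[x]$, $i\in I$, and a maximal ideal $P$, $f_k$ is called indispensable for $P$ (among the $f_i$, $i\in I$) if there exists $z\in D$ with $\mathsf{v}_P(f_k(z))>0$ and $\mathsf{v}_P(f_i(z))=0$ for all $i\neq k$. A factorization is a product of irreducible elements (non-zero non-units not expressible as a product of two non-units); two factorizations are essentially the same if they have the same number of factors and, after reindexing, corresponding factors differ by unit factors of $\operatorname{Int}(D)$. *)

theory Defs
  imports "HOL-Computational_Algebra.Polynomial_Factorial" "HOL-Library.Extended_Nat" "HOL-Combinatorics.Permutations"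
begin

definition is_ideal :: "'a::comm_ring_1 set \<Rightarrow> bool" where
  "is_ideal J \<longleftrightarrow> 0 \<in> J \<and> (\<forall>x\<in>J. \<forall>y\<in>J. x + y \<in> J) \<and> (\<forall>r. \<forall>x\<in>J. r * x \<in> J)"

definition ideal_span :: "'a::comm_ring_1 set \<Rightarrow> 'a set" where
  "ideal_span S = \<Inter>{J. is_ideal J \<and> S \<subseteq> J}"

definition principal_ideal :: "'a::comm_ring_1 \<Rightarrow> 'a set" where
  "principal_ideal c = range (\<lambda>x. c * x)"

definition ideal_mult :: "'a::comm_ring_1 set \<Rightarrow> 'a set \<Rightarrow> 'a set" where
  "ideal_mult J1 J2 = ideal_span {x * y | x y. x \<in> J1 \<and> y \<in> J2}"

primrec ideal_pow :: "'a::comm_ring_1 set \<Rightarrow> nat \<Rightarrow> 'a set" where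
  "ideal_pow P 0 = UNIV"
| "ideal_pow P (Suc n) = ideal_mult P (ideal_pow P n)"

definition prime_ideal :: "'a::comm_ring_1 set \<Rightarrow> bool" where
  "prime_ideal P \<longleftrightarrow> is_ideal P \<and> P \<noteq> UNIV \<and> (\<forall>a b. a * b \<in> P \<longrightarrow> a \<in> P \<or> b \<in> P)"

definition maximal_ideal :: "'a::comm_ring_1 set \<Rightarrow> bool" where
  "maximal_ideal P \<longleftrightarrow> is_ideal P \<and> P \<noteq> UNIV \<and>
     (\<forall>J. is_ideal J \<and> P \<subseteq> J \<longrightarrow> J = P \<or> J = UNIV)"

definition noetherian_domain :: "'a::idom itself \<Rightarrow> bool" where
  "noetherian_domain _ \<longleftrightarrow> (\<forall>J::'a set. is_ideal J \<longrightarrow> (\<exists>F. finite F \<and> J = ideal_span F))"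

definition integrally_closed :: "'a::idom itself \<Rightarrow> bool" where
  "integrally_closed _ \<longleftrightarrow> (\<forall>x::'a fract. (\<exists>p::'a poly. lead_coeff p = 1 \<and> poly (map_poly to_fract p) x = 0)
      \<longrightarrow> x \<in> range to_fract)"

definition dim_le_one :: "'a::idom itself \<Rightarrow> bool" where
  "dim_le_one _ \<longleftrightarrow> (\<forall>P::'a set. prime_ideal P \<and> P \<noteq> {0} \<longrightarrow> maximal_ideal P)"

definition dedekind_domain :: "'a::idom itself \<Rightarrow> bool" where
  "dedekind_domain T \<longleftrightarrow> noetherian_domain T \<and> integrally_closed T \<and> dim_le_one T"

definition fixed_divisor :: "'a::idom poly \<Rightarrow> 'a set" where
  "fixed_divisor g = ideal_span (range (poly g))"

text \<open>P-adic valuation: largest n with a in P^n (infinity for a = 0).\<close>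
definition vP :: "'a::idom set \<Rightarrow> 'a \<Rightarrow> enat" where
  "vP P a = (SUP n\<in>{n. a \<in> ideal_pow P n}. enat n)"

definition indispensable :: "'a::idom set \<Rightarrow> ('i \<Rightarrow> 'a poly) \<Rightarrow> 'i set \<Rightarrow> 'i \<Rightarrow> bool" where
  "indispensable P f I k \<longleftrightarrow>
     (\<exists>z. vP P (poly (f k) z) > 0 \<and> (\<forall>i\<in>I. i \<noteq> k \<longrightarrow> vP P (poly (f i) z) = 0))"

definition IntD :: "'a::idom fract poly set" where
  "IntD = {h. \<forall>a. poly h (to_fract a) \<in> range to_fract}"

definition IntD_unit :: "'a::idom fract poly \<Rightarrow> bool" where
  "IntD_unit u \<longleftrightarrow> u \<in> IntD \<and> (\<exists>v\<in>IntD. u * v = 1)"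

definition IntD_irreducible :: "'a::idom fract poly \<Rightarrow> bool" where
  "IntD_irreducible h \<longleftrightarrow> h \<in> IntD \<and> h \<noteq> 0 \<and> \<not> IntD_unit h \<and>
     (\<forall>a\<in>IntD. \<forall>b\<in>IntD. h = a * b \<longrightarrow> IntD_unit a \<or> IntD_unit b)"

definition IntD_factorization :: "'a::idom fract poly \<Rightarrow> 'a fract poly list \<Rightarrow> bool" where
  "IntD_factorization h xs \<longleftrightarrow> (\<forall>x\<in>set xs. IntD_irreducible x) \<and> prod_list xs = h"

definition ess_same :: "'a::idom fract poly list \<Rightarrow> 'a fract poly list \<Rightarrow> bool" where
  "ess_same xs ys \<longleftrightarrow> length xs = length ys \<and>
     (\<exists>\<sigma>. \<sigma> permutes {..<length xs} \<and>
        (\<forall>k<length xs. \<exists>u. IntD_unit u \<and> xs ! k = u * ys ! (\<sigma> k)))"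


definition candidate_split :: "'a::idom \<Rightarrow> ('i \<Rightarrow> 'a poly) \<Rightarrow> 'i set \<Rightarrow> 'i set \<Rightarrow> 'i set \<Rightarrow> 'i set \<Rightarrow> 'i list \<Rightarrow> bool" where
  "candidate_split c f I Lambda J1 J2 js \<longleftrightarrow>
     Lambda \<union> J1 \<union> J2 = I \<and> Lambda \<inter> J1 = {} \<and> Lambda \<inter> J2 = {} \<and> J1 \<inter> J2 = {} \<and>
     fixed_divisor (\<Prod>i\<in>Lambda \<union> J1. f i) = principal_ideal c \<and>
     (\<forall>J'. J' \<subset> J1 \<longrightarrow> fixed_divisor (\<Prod>i\<in>Lambda \<union> J'. f i) \<noteq> principal_ideal c) \<and>
     distinct js \<and> set js = J2"

definition candidate_expr :: "'a::idom \<Rightarrow> ('i \<Rightarrow> 'a poly) \<Rightarrow> 'i set \<Rightarrow> 'i set \<Rightarrow> 'i list \<Rightarrow> 'a fract poly list" where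
  "candidate_expr c f Lambda J1 js =
     smult (inverse (to_fract c)) (map_poly to_fract (\<Prod>i\<in>Lambda \<union> J1. f i))
     # map (\<lambda>j. map_poly to_fract (f j)) js"

end

theory Submission
  imports Defs
begin

section \<open>Ideals\<close>

lemma is_ideal_span: "is_ideal (ideal_span S)"
  unfolding ideal_span_def is_ideal_def by auto

lemma span_sub: "S \<subseteq> ideal_span S"
  unfolding ideal_span_def by auto

lemma span_least: "is_ideal J \<Longrightarrow> S \<subseteq> J \<Longrightarrow> ideal_span S \<subseteq> J"
  unfolding ideal_span_def by auto

lemma principal_mem: "x \<in> principal_ideal d \<longleftrightarrow> d dvd x"
  unfolding principal_ideal_def by (auto simp: dvd_def)

lemma is_ideal_principal: "is_ideal (principal_ideal d)"
  unfolding is_ideal_def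
proof (intro conjI ballI allI)
  show "0 \<in> principal_ideal d" by (simp add: principal_mem)
next
  fix x y assume "x \<in> principal_ideal d" "y \<in> principal_ideal d"
  then show "x + y \<in> principal_ideal d" by (simp add: principal_mem)
next
  fix r x assume "x \<in> principal_ideal d"
  then show "r * x \<in> principal_ideal d" by (simp add: principal_mem)
qed

lemma ideal_neg: "is_ideal J \<Longrightarrow> x \<in> J \<Longrightarrow> r * x \<in> J"
  unfolding is_ideal_def by auto

lemma ideal_add: "is_ideal J \<Longrightarrow> x \<in> J \<Longrightarrow> y \<in> J \<Longrightarrow> x + y \<in> J"
  unfolding is_ideal_def by auto

lemma ideal_one: "is_ideal J \<Longrightarrow> 1 \<in> J \<Longrightarrow> J = UNIV"
  using ideal_neg[of J 1] by auto

lemma principal_sub: "is_ideal J \<Longrightarrow> d \<in> J \<Longrightarrow> principal_ideal d \<subseteq> J"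
  unfolding principal_ideal_def using ideal_neg[of J d] by (auto simp: mult.commute)

lemma ideal_mult_sub: "is_ideal P \<Longrightarrow> ideal_mult P J \<subseteq> P"
  unfolding ideal_mult_def
proof (rule span_least)
  assume P: "is_ideal P"
  show "{x * y |x y. x \<in> P \<and> y \<in> J} \<subseteq> P"
  proof
    fix z assume "z \<in> {x * y |x y. x \<in> P \<and> y \<in> J}"
    then obtain x y where "z = y * x" "x \<in> P" by (auto simp: mult.commute)
    then show "z \<in> P" using ideal_neg[OF P] by simp
  qed
qed

lemma ideal_pow_sub: "is_ideal P \<Longrightarrow> n > 0 \<Longrightarrow> ideal_pow P n \<subseteq> P"
  by (cases n) (auto simp: ideal_mult_sub)

lemma ideal_pow_one: "P \<subseteq> ideal_pow P 1"
proof
  fix x assume "x \<in> P"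
  have "x \<in> {x * y |x y. x \<in> P \<and> y \<in> (UNIV::'a set)}"
    by (rule CollectI, rule exI[of _ x], rule exI[of _ 1]) (simp add: \<open>x \<in> P\<close>)
  then have "x \<in> ideal_span {x * y |x y. x \<in> P \<and> y \<in> (UNIV::'a set)}" using span_sub[of "{x * y |x y. x \<in> P \<and> y \<in> (UNIV::'a set)}"] by blast
  then show "x \<in> ideal_pow P 1" by (simp add: ideal_mult_def)
qed

lemma vP_pos: "is_ideal P \<Longrightarrow> 0 < vP P a \<Longrightarrow> a \<in> P"
proof -
  assume P: "is_ideal P" and "0 < vP P a"
  then obtain n where n: "a \<in> ideal_pow P n" "0 < enat n"
    unfolding vP_def less_SUP_iff by auto
  then have "n > 0" by (auto simp: enat_0_iff)
  then show "a \<in> P" using ideal_pow_sub[OF P] n by blast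
qed

lemma vP_zero: "vP P a = 0 \<Longrightarrow> a \<notin> P"
proof
  assume "vP P a = 0" "a \<in> P"
  then have "a \<in> ideal_pow P 1" using ideal_pow_one by blast
  then have "enat 1 \<le> vP P a" unfolding vP_def by (intro SUP_upper2[of 1]) auto
  with \<open>vP P a = 0\<close> show False by (simp add: enat_0_iff)
qed

lemma maximal_is_ideal: "maximal_ideal P \<Longrightarrow> is_ideal P"
  unfolding maximal_ideal_def by auto

lemma maximal_one: "maximal_ideal P \<Longrightarrow> 1 \<notin> P"
  unfolding maximal_ideal_def using ideal_one by blast

lemma maximal_prime:
  fixes a b :: "'a::comm_ring_1"
  assumes P: "maximal_ideal P" and ab: "a * b \<in> P" and a: "a \<notin> P"
  shows "b \<in> P"
proof -
  define J where "J = {p + a * r |p r. p \<in> P}"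
  have PI: "is_ideal P" using P maximal_is_ideal by blast
  have "is_ideal J"
    unfolding is_ideal_def J_def
  proof (intro conjI ballI allI)
    have "0 + a * 0 \<in> {p + a * r |p r. p \<in> P}" using PI unfolding is_ideal_def by blast
    then show "0 \<in> {p + a * r |p r. p \<in> P}" by simp
  next
    fix x y assume "x \<in> {p + a * r |p r. p \<in> P}" "y \<in> {p + a * r |p r. p \<in> P}"
    then obtain p r p' r' where "x = p + a * r" "y = p' + a * r'" "p \<in> P" "p' \<in> P" by auto
    then show "x + y \<in> {p + a * r |p r. p \<in> P}"
      using ideal_add[OF PI, of p p'] by (intro CollectI exI[of _ "p + p'"] exI[of _ "r + r'"]) (auto simp: algebra_simps)
  next
    fix s x assume "x \<in> {p + a * r |p r. p \<in> P}"
    then obtain p r where "x = p + a * r" "p \<in> P" by auto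
    then show "s * x \<in> {p + a * r |p r. p \<in> P}"
      using ideal_neg[OF PI, of p s] by (intro CollectI exI[of _ "s * p"] exI[of _ "s * r"]) (auto simp: algebra_simps)
  qed
  moreover have "P \<subseteq> J" unfolding J_def by (force intro: exI[of _ 0])
  moreover have "0 + a * 1 \<in> J" unfolding J_def using PI unfolding is_ideal_def
    by (intro CollectI exI[of _ "0 + a * 1"] exI[of _ 0] exI[of _ 1] conjI) auto
  then have "a \<in> J" by simp
  ultimately have "J = P \<or> J = UNIV" using P unfolding maximal_ideal_def by blast
  then have "J = UNIV" using \<open>a \<in> J\<close> a by blast
  then obtain p r where pr: "1 = p + a * r" "p \<in> P" unfolding J_def by blast
  then have "b = b * p + r * (a * b)" by (metis mult.commute mult.left_commute mult_1_left distrib_left)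
  moreover have "b * p \<in> P" "r * (a * b) \<in> P" using ideal_neg[OF PI pr(2), of b] ideal_neg[OF PI ab, of r] by auto
  ultimately show "b \<in> P" using ideal_add[OF PI] by metis
qed

lemma maximal_prod_notin:
  assumes P: "maximal_ideal P" and "finite B" and "\<forall>i\<in>B. g i \<notin> P"
  shows "prod g B \<notin> P"
  using assms(2,3)
proof (induction B rule: finite_induct)
  case empty then show ?case using maximal_one[OF P] by simp
next
  case (insert x F)
  then show ?case using maximal_prime[OF P, of "g x" "prod g F"] by auto
qed

lemma exists_maximal:
  fixes J :: "'a::comm_ring_1 set"
  assumes J: "is_ideal J" and one: "1 \<notin> J"
  shows "\<exists>P. maximal_ideal P \<and> J \<subseteq> P"
proof -
  define A where "A = {K. is_ideal K \<and> J \<subseteq> K \<and> 1 \<notin> K}"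
  have "\<exists>M\<in>A. \<forall>X\<in>A. M \<subseteq> X \<longrightarrow> X = M"
  proof (rule subset_Zorn_nonempty)
    show "A \<noteq> {}" using J one unfolding A_def by blast
  next
    fix C assume C: "C \<noteq> {}" "subset.chain A C"
    have ch: "C \<subseteq> A" "\<forall>X\<in>C. \<forall>Y\<in>C. X \<subseteq> Y \<or> Y \<subseteq> X"
      using C(2) unfolding subset.chain_def by auto
    have "is_ideal (\<Union>C)"
      unfolding is_ideal_def
    proof (intro conjI ballI allI)
      show "0 \<in> \<Union>C" using C ch unfolding A_def is_ideal_def by blast
    next
      fix x y assume "x \<in> \<Union>C" "y \<in> \<Union>C"
      then obtain X Y where XY: "X \<in> C" "Y \<in> C" "x \<in> X" "y \<in> Y" by auto
      then have "X \<subseteq> Y \<or> Y \<subseteq> X" using ch by auto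
      then show "x + y \<in> \<Union>C"
      proof
        assume "X \<subseteq> Y" then show ?thesis using XY ch ideal_add[of Y x y] unfolding A_def by blast
      next
        assume "Y \<subseteq> X" then show ?thesis using XY ch ideal_add[of X x y] unfolding A_def by blast
      qed
    next
      fix r x assume "x \<in> \<Union>C"
      then show "r * x \<in> \<Union>C" using ch ideal_neg unfolding A_def by blast
    qed
    then show "\<Union>C \<in> A" using C ch unfolding A_def by blast
  qed
  then obtain M where M: "M \<in> A" "\<forall>X\<in>A. M \<subseteq> X \<longrightarrow> X = M" by blast
  have "maximal_ideal M"
    unfolding maximal_ideal_def
  proof (intro conjI allI impI)
    show "is_ideal M" "M \<noteq> UNIV" using M unfolding A_def by auto
  next
    fix K assume K: "is_ideal K \<and> M \<subseteq> K"
    show "K = M \<or> K = UNIV"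
    proof (cases "1 \<in> K")
      case True then show ?thesis using K ideal_one by blast
    next
      case False then have "K \<in> A" using K M unfolding A_def by blast
      then show ?thesis using M K by blast
    qed
  qed
  then show ?thesis using M unfolding A_def by blast
qed

section \<open>Fixed divisors and Int(D)\<close>

lemma fd_ideal: "is_ideal (fixed_divisor g)"
  unfolding fixed_divisor_def by (rule is_ideal_span)

lemma val_in_fd: "poly g a \<in> fixed_divisor g"
  unfolding fixed_divisor_def using span_sub by blast

lemma fd_dvd:
  assumes "g dvd h" shows "fixed_divisor h \<subseteq> fixed_divisor g"
proof -
  obtain q where h: "h = g * q" using assms by (auto elim: dvdE)
  have "range (poly h) \<subseteq> fixed_divisor g"
  proof
    fix y assume "y \<in> range (poly h)"
    then obtain a where "y = poly h a" by auto
    then have "y = poly q a * poly g a" by (simp add: h)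
    then show "y \<in> fixed_divisor g" using ideal_neg[OF fd_ideal val_in_fd] by simp
  qed
  then show ?thesis unfolding fixed_divisor_def[of h] by (rule span_least[OF fd_ideal])
qed

lemma fd_sub_principal:
  assumes "\<forall>z. d dvd poly g z" shows "fixed_divisor g \<subseteq> principal_ideal d"
  unfolding fixed_divisor_def
  by (rule span_least[OF is_ideal_principal]) (auto simp: principal_mem assms)

lemma fd_principal_dvd:
  assumes "fixed_divisor g = principal_ideal c" shows "c dvd poly g z"
  using val_in_fd[of g z] assms by (simp add: principal_mem)

lemma fd_principal_mem:
  assumes "fixed_divisor g = principal_ideal c" shows "c \<in> fixed_divisor g"
  using assms by (simp add: principal_mem)

lemma poly_fract: "poly (map_poly to_fract p) (to_fract a) = to_fract (poly p a)"
  by (induction p) (simp_all add: map_poly_pCons)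

lemma fract_prod: "map_poly to_fract (prod g S) = (\<Prod>i\<in>S. map_poly to_fract (g i))"
proof (cases "finite S")
  case True then show ?thesis by (induction S rule: finite_induct) auto
qed simp

lemma fract_IntD: "map_poly to_fract p \<in> IntD"
  unfolding IntD_def by (simp add: poly_fract)

lemma IntD_mult: "a \<in> IntD \<Longrightarrow> b \<in> IntD \<Longrightarrow> a * b \<in> IntD"
  unfolding IntD_def by (auto simp: image_iff) (metis to_fract_mult)

lemma IntD_one: "1 \<in> IntD"
  unfolding IntD_def by (auto simp: image_iff) (metis to_fract_1)

lemma IntD_prod: "\<forall>i\<in>S. g i \<in> IntD \<Longrightarrow> prod g S \<in> IntD"
proof (cases "finite S")
  case True
  assume "\<forall>i\<in>S. g i \<in> IntD"
  with True show ?thesis by (induction S rule: finite_induct) (auto simp: IntD_one IntD_mult)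
qed (simp add: IntD_one)

lemma div_to_fract_iff:
  assumes "d \<noteq> 0"
  shows "inverse (to_fract d) * to_fract x \<in> range to_fract \<longleftrightarrow> d dvd x"
proof
  assume "inverse (to_fract d) * to_fract x \<in> range to_fract"
  then obtain y where "inverse (to_fract d) * to_fract x = to_fract y" by auto
  then have "to_fract x = to_fract d * to_fract y" using assms by (simp add: field_simps)
  then have "x = d * y" by (simp del: to_fract_mult add: to_fract_mult[symmetric])
  then show "d dvd x" by simp
next
  assume "d dvd x"
  then obtain y where "x = d * y" by (auto elim: dvdE)
  then have "inverse (to_fract d) * to_fract x = to_fract y" using assms by (simp add: field_simps)
  then show "inverse (to_fract d) * to_fract x \<in> range to_fract" by (metis rangeI)
qed

lemma smult_inv_IntD_iff:
  assumes "d \<noteq> 0"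
  shows "smult (inverse (to_fract d)) (map_poly to_fract g) \<in> IntD \<longleftrightarrow> (\<forall>z. d dvd poly g z)"
  unfolding IntD_def by (simp add: poly_fract div_to_fract_iff[OF assms])

lemma const_IntD_unit:
  assumes "e dvd 1" shows "IntD_unit [:to_fract e:]"
proof -
  obtain e' where e': "1 = e * e'" using assms by (auto elim: dvdE)
  have "[:to_fract e:] * [:to_fract e':] = [:to_fract (e * e'):]" by simp
  also have "\<dots> = 1" by (simp add: e'[symmetric] one_pCons)
  finally have "[:to_fract e:] * [:to_fract e':] = 1" .
  moreover have "[:to_fract e:] \<in> IntD" "[:to_fract e':] \<in> IntD" unfolding IntD_def by auto
  ultimately show ?thesis unfolding IntD_unit_def by blast
qed

lemma IntD_unit_deg:
  assumes "IntD_unit u" shows "degree u = 0"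
proof -
  obtain v where "u * v = 1" using assms unfolding IntD_unit_def by blast
  then have "is_unit u" by (metis dvd_triv_left)
  then show ?thesis by (auto simp: is_unit_poly_iff)
qed

lemma smult_beta:
  assumes "smult \<beta> (map_poly to_fract g) \<in> IntD" and "1 \<in> fixed_divisor g"
  shows "\<beta> \<in> range to_fract"
proof -
  define J where "J = {x. \<beta> * to_fract x \<in> range to_fract}"
  have "is_ideal J"
    unfolding is_ideal_def J_def
  proof (intro conjI ballI allI)
    show "0 \<in> {x. \<beta> * to_fract x \<in> range to_fract}" by (simp add: image_iff)
  next
    fix x y assume "x \<in> {x. \<beta> * to_fract x \<in> range to_fract}" "y \<in> {x. \<beta> * to_fract x \<in> range to_fract}"
    then obtain u v where "\<beta> * to_fract x = to_fract u" "\<beta> * to_fract y = to_fract v" by auto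
    then have "\<beta> * to_fract (x + y) = to_fract (u + v)" by (simp add: distrib_left)
    then show "x + y \<in> {x. \<beta> * to_fract x \<in> range to_fract}" by (metis mem_Collect_eq rangeI)
  next
    fix r x assume "x \<in> {x. \<beta> * to_fract x \<in> range to_fract}"
    then obtain u where "\<beta> * to_fract x = to_fract u" by auto
    then have "\<beta> * to_fract (r * x) = to_fract (r * u)" by (simp add: mult.left_commute)
    then show "r * x \<in> {x. \<beta> * to_fract x \<in> range to_fract}" by (metis mem_Collect_eq rangeI)
  qed
  moreover have "range (poly g) \<subseteq> J"
    using assms(1) unfolding J_def IntD_def by (auto simp: poly_fract)
  ultimately have "fixed_divisor g \<subseteq> J" unfolding fixed_divisor_def by (rule span_least)
  then have "1 \<in> J" using assms(2) by blast
  then show ?thesis unfolding J_def by simp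
qed

section \<open>Factorization in K[x]\<close>

lemma dvd_prod_primes:
  fixes \<phi> :: "'i \<Rightarrow> 'k::field poly"
  assumes "finite S" "\<forall>i\<in>S. prime_elem (\<phi> i)" "a dvd prod \<phi> S"
  shows "\<exists>A\<subseteq>S. \<exists>\<alpha>. \<alpha> \<noteq> 0 \<and> a = smult \<alpha> (prod \<phi> A)"
  using assms(1,2,3)
proof (induction S arbitrary: a rule: finite_induct)
  case empty
  then obtain c where "a = [:c:]" "c dvd 1" by (auto simp: is_unit_poly_iff)
  then show ?case by (intro exI[of _ "{}"] exI[of _ c]) auto
next
  case (insert s S)
  have ps: "prime_elem (\<phi> s)" using insert by auto
  then have nz: "\<phi> s \<noteq> 0" by auto
  have dv: "a dvd \<phi> s * prod \<phi> S" using insert by simp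
  show ?case
  proof (cases "\<phi> s dvd a")
    case True
    then obtain a' where a': "a = \<phi> s * a'" by (auto elim: dvdE)
    then have "a' dvd prod \<phi> S" using dv nz by simp
    then obtain A \<alpha> where A: "A \<subseteq> S" "\<alpha> \<noteq> 0" "a' = smult \<alpha> (prod \<phi> A)" using insert by blast
    have "s \<notin> A" using A insert by auto
    moreover have "finite A" using A(1) insert(1) finite_subset by blast
    ultimately have "a = smult \<alpha> (prod \<phi> (insert s A))" using A a' by (simp add: mult_smult_right)
    then show ?thesis using A by (intro exI[of _ "insert s A"]) auto
  next
    case False
    obtain r where r: "\<phi> s * prod \<phi> S = a * r" using dv by (auto elim: dvdE)
    then have "\<phi> s dvd a * r" by (metis dvd_triv_left)
    then have "\<phi> s dvd r" using False prime_elem_dvd_mult_iff[OF ps] by blast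
    then obtain r' where r': "r = \<phi> s * r'" by (auto elim: dvdE)
    have "\<phi> s * prod \<phi> S = \<phi> s * (a * r')" using r r' by (simp add: ac_simps)
    then have "prod \<phi> S = a * r'" using nz by simp
    then have "a dvd prod \<phi> S" by simp
    then obtain A \<alpha> where A: "A \<subseteq> S" "\<alpha> \<noteq> 0" "a = smult \<alpha> (prod \<phi> A)" using insert by blast
    then show ?thesis by (intro exI[of _ A]) auto
  qed
qed

lemma prime_poly_deg:
  fixes p :: "'k::field poly"
  assumes "prime_elem p" shows "degree p > 0"
proof (rule ccontr)
  assume "\<not> degree p > 0"
  then have "degree p = 0" by simp
  moreover have "p \<noteq> 0" using assms by auto
  ultimately have "is_unit p" using is_unit_iff_degree by blast
  then show False using assms prime_elem_not_unit by blast
qed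

lemma list_factor:
  fixes \<phi> :: "'i \<Rightarrow> 'k::field poly"
  assumes "finite S" "\<forall>i\<in>S. prime_elem (\<phi> i)" "prod_list xs = smult \<kappa> (prod \<phi> S)" "\<kappa> \<noteq> 0"
  shows "\<exists>A lm. (\<forall>k<length xs. A k \<subseteq> S \<and> lm k \<noteq> 0 \<and> xs!k = smult (lm k) (prod \<phi> (A k))) \<and>
           (\<forall>k<length xs. \<forall>l<length xs. k \<noteq> l \<longrightarrow> A k \<inter> A l = {}) \<and> (\<Union>k<length xs. A k) = S"
  using assms
proof (induction xs arbitrary: S \<kappa>)
  case Nil
  have nz: "\<forall>i\<in>S. \<phi> i \<noteq> 0" using Nil by auto
  have "degree (smult \<kappa> (prod \<phi> S)) = 0" using Nil(3)[symmetric] by simp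
  then have "degree (prod \<phi> S) = 0" using Nil by simp
  then have "(\<Sum>i\<in>S. degree (\<phi> i)) = 0" using degree_prod_eq_sum_degree[OF nz] by simp
  then have "\<forall>i\<in>S. degree (\<phi> i) = 0" using Nil(1) by simp
  then have "S = {}" using Nil(2) prime_poly_deg by fastforce
  then show ?case by simp
next
  case (Cons x xs)
  have nz: "\<forall>i\<in>S. \<phi> i \<noteq> 0" using Cons by auto
  have "x dvd smult \<kappa> (prod \<phi> S)" using Cons(4) by (metis dvd_triv_left prod_list.Cons)
  then have "x dvd prod \<phi> S" using Cons(5) dvd_smult_cancel by blast
  then obtain A0 \<alpha> where A0: "A0 \<subseteq> S" "\<alpha> \<noteq> 0" "x = smult \<alpha> (prod \<phi> A0)"
    using dvd_prod_primes[OF Cons(2,3)] by blast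
  have split: "prod \<phi> S = prod \<phi> (S - A0) * prod \<phi> A0"
    using prod.subset_diff[OF A0(1) Cons(2)] by simp
  have nz0: "prod \<phi> A0 \<noteq> 0" using nz A0(1) by (auto simp: prod_zero_iff Cons(2) finite_subset)
  have "smult \<alpha> (prod \<phi> A0) * prod_list xs = smult \<kappa> (prod \<phi> (S - A0) * prod \<phi> A0)"
    using Cons(4) A0(3) split by simp
  then have "prod \<phi> A0 * smult \<alpha> (prod_list xs) = prod \<phi> A0 * smult \<kappa> (prod \<phi> (S - A0))"
    by (simp add: mult.commute)
  then have eq: "smult \<alpha> (prod_list xs) = smult \<kappa> (prod \<phi> (S - A0))" using mult_cancel_left[of "prod \<phi> A0"] nz0 by blast
  have "prod_list xs = smult (inverse \<alpha>) (smult \<alpha> (prod_list xs))" using A0(2) by simp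
  also have "\<dots> = smult (\<kappa> / \<alpha>) (prod \<phi> (S - A0))" unfolding eq by (simp add: field_simps)
  finally have "prod_list xs = smult (\<kappa> / \<alpha>) (prod \<phi> (S - A0))" .
  then obtain A' lm' where IH: "\<forall>k<length xs. A' k \<subseteq> S - A0 \<and> lm' k \<noteq> 0 \<and> xs!k = smult (lm' k) (prod \<phi> (A' k))"
    "\<forall>k<length xs. \<forall>l<length xs. k \<noteq> l \<longrightarrow> A' k \<inter> A' l = {}" "(\<Union>k<length xs. A' k) = S - A0"
    using Cons.IH[of "S - A0" "\<kappa> / \<alpha>"] Cons(2,3,5) A0(2) by auto
  define A where "A k = (if k = 0 then A0 else A' (k - 1))" for k
  define lm where "lm k = (if k = 0 then \<alpha> else lm' (k - 1))" for k
  have 1: "\<forall>k<length (x # xs). A k \<subseteq> S \<and> lm k \<noteq> 0 \<and> (x # xs)!k = smult (lm k) (prod \<phi> (A k))"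
  proof (intro allI impI)
    fix k assume "k < length (x # xs)"
    then show "A k \<subseteq> S \<and> lm k \<noteq> 0 \<and> (x # xs)!k = smult (lm k) (prod \<phi> (A k))"
      using IH(1)[rule_format, of "k - 1"] A0 unfolding A_def lm_def by (cases k) auto
  qed
  have 2: "\<forall>k<length (x # xs). \<forall>l<length (x # xs). k \<noteq> l \<longrightarrow> A k \<inter> A l = {}"
  proof (intro allI impI)
    fix k l assume kl: "k < length (x # xs)" "l < length (x # xs)" "k \<noteq> l"
    show "A k \<inter> A l = {}"
    proof (cases "k = 0")
      case True
      then have "l - 1 < length xs" "l \<noteq> 0" using kl by auto
      then show ?thesis using True IH(1)[rule_format, of "l - 1"] unfolding A_def by auto
    next
      case False
      show ?thesis
      proof (cases "l = 0")
        case True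
        then have "k - 1 < length xs" "k \<noteq> 0" using kl by auto
        then show ?thesis using True IH(1)[rule_format, of "k - 1"] unfolding A_def by auto
      next
        case False2: False
        then have "k - 1 < length xs" "l - 1 < length xs" "k - 1 \<noteq> l - 1" using kl False by auto
        then show ?thesis using IH(2)[rule_format, of "k - 1" "l - 1"] False False2 unfolding A_def by auto
      qed
    qed
  qed
  have "(\<Union>k<length (x # xs). A k) = A 0 \<union> (\<Union>k<length xs. A (Suc k))"
    by (simp add: lessThan_Suc_eq_insert_0 UN_insert image_Suc_lessThan[symmetric] del: image_Suc_lessThan)
  also have "\<dots> = A0 \<union> (S - A0)" using IH(3) unfolding A_def by simp
  also have "\<dots> = S" using A0(1) by auto
  finally show ?case using 1 2 by blast
qed

lemma perm_front:
  assumes "k0 < (n::nat)"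
  shows "(\<lambda>k. if k = k0 then 0 else if k < k0 then Suc k else k) permutes {..<n}"
proof (rule bij_imp_permutes)
  let ?s = "\<lambda>k::nat. if k = k0 then 0 else if k < k0 then Suc k else k"
  let ?t = "\<lambda>k::nat. if k = 0 then k0 else if k \<le> k0 then k - 1 else k"
  show "bij_betw ?s {..<n} {..<n}"
    by (rule bij_betw_byWitness[where f' = ?t]) (use assms in auto)
  show "?s x = x" if "x \<notin> {..<n}" for x using that assms by auto
qed

definition Lfront :: "nat \<Rightarrow> nat \<Rightarrow> nat list" where
  "Lfront k0 n = [0..<k0] @ [Suc k0..<n]"

lemma Lfront_length: "k0 < n \<Longrightarrow> length (Lfront k0 n) = n - 1"
  unfolding Lfront_def by auto

lemma Lfront_nth1: "k < k0 \<Longrightarrow> Lfront k0 n ! k = k"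
  unfolding Lfront_def by (simp add: nth_append)

lemma Lfront_nth2: "k0 < k \<Longrightarrow> k < n \<Longrightarrow> Lfront k0 n ! (k - 1) = k"
  unfolding Lfront_def by (auto simp: nth_append)

lemma Lfront_set: "k0 < n \<Longrightarrow> set (Lfront k0 n) = {..<n} - {k0}"
  unfolding Lfront_def by auto

lemma Lfront_distinct: "distinct (Lfront k0 n)"
  unfolding Lfront_def by auto

locale L37 =
  fixes c :: "'a::idom"
    and I :: "'i set"
    and f :: "'i \<Rightarrow> 'a poly"
    and Lam :: "'a set \<Rightarrow> 'i set"
  assumes finI: "finite I"
    and irr: "\<forall>i\<in>I. irreducible (map_poly to_fract (f i))"
    and c_nonunit: "\<not> c dvd 1" and c_nz: "c \<noteq> 0"
    and dfix: "fixed_divisor (\<Prod>i\<in>I. f i) = principal_ideal c"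
    and LamP: "\<forall>P\<in>{P. maximal_ideal P \<and> c \<in> P}.
                 Lam P \<subseteq> I \<and> (\<forall>k\<in>Lam P. indispensable P f I k)"
    and inter: "(\<Inter>P\<in>{P. maximal_ideal P \<and> c \<in> P}. Lam P) \<noteq> {}"
begin

abbreviation "PP \<equiv> {P. maximal_ideal P \<and> c \<in> P}"
abbreviation "Lambda \<equiv> (\<Union>P\<in>PP. Lam P)"
abbreviation "phi i \<equiv> map_poly to_fract (f i)"
abbreviation "Phi S \<equiv> map_poly to_fract (\<Prod>i\<in>S. f i)"
abbreviation "ic \<equiv> inverse (to_fract c)"

definition ks where "ks = (SOME k. k \<in> (\<Inter>P\<in>PP. Lam P))"

lemma ks: "P \<in> PP \<Longrightarrow> ks \<in> Lam P"
proof -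
  obtain k where "k \<in> (\<Inter>P\<in>PP. Lam P)" using inter by blast
  then have "ks \<in> (\<Inter>P\<in>PP. Lam P)" unfolding ks_def by (rule someI)
  then show "P \<in> PP \<Longrightarrow> ks \<in> Lam P" by blast
qed

lemma PP_ne: "\<exists>P. P \<in> PP"
proof -
  have "1 \<notin> principal_ideal c" using c_nonunit by (simp add: principal_mem)
  then obtain P where "maximal_ideal P" "principal_ideal c \<subseteq> P"
    using exists_maximal[OF is_ideal_principal] by blast
  moreover have "c \<in> principal_ideal c" by (simp add: principal_mem)
  ultimately show ?thesis by blast
qed

lemma Lambda_sub: "Lambda \<subseteq> I" using LamP by blast

lemma ks_Lambda: "ks \<in> Lambda" using PP_ne ks by blast

lemma ks_I: "ks \<in> I" using ks_Lambda Lambda_sub by blast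

lemma Lambda_ne: "Lambda \<noteq> {}" using ks_Lambda by blast

lemma indisp:
  assumes "P \<in> PP" "k \<in> Lam P"
  shows "\<exists>z. poly (f k) z \<in> P \<and> (\<forall>i\<in>I. i \<noteq> k \<longrightarrow> poly (f i) z \<notin> P)"
proof -
  have "indispensable P f I k" using LamP assms by blast
  then obtain z where z: "vP P (poly (f k) z) > 0" "\<forall>i\<in>I. i \<noteq> k \<longrightarrow> vP P (poly (f i) z) = 0"
    unfolding indispensable_def by blast
  have "is_ideal P" using assms maximal_is_ideal by blast
  then show ?thesis using z vP_pos vP_zero by blast
qed

lemma c_in_fd:
  assumes "B \<subseteq> I" shows "c \<in> fixed_divisor (\<Prod>i\<in>B. f i)"
proof -
  have "(\<Prod>i\<in>B. f i) dvd (\<Prod>i\<in>I. f i)" by (intro prod_dvd_prod_subset finI assms)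
  from fd_dvd[OF this] show ?thesis using fd_principal_mem[OF dfix] by blast
qed

lemma one_in_fd:
  assumes "B \<subseteq> I" "ks \<notin> B"
  shows "1 \<in> fixed_divisor (\<Prod>i\<in>B. f i)"
proof (rule ccontr)
  assume "1 \<notin> fixed_divisor (\<Prod>i\<in>B. f i)"
  then obtain Q where Q: "maximal_ideal Q" "fixed_divisor (\<Prod>i\<in>B. f i) \<subseteq> Q"
    using exists_maximal[OF fd_ideal] by blast
  have "c \<in> Q" using c_in_fd[OF assms(1)] Q(2) by blast
  then have QP: "Q \<in> PP" using Q(1) by blast
  obtain z where z: "\<forall>i\<in>I. i \<noteq> ks \<longrightarrow> poly (f i) z \<notin> Q" using indisp[OF QP ks[OF QP]] by blast
  have "finite B" using assms(1) finI finite_subset by blast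
  moreover have "\<forall>i\<in>B. poly (f i) z \<notin> Q"
  proof
    fix i assume "i \<in> B"
    then have "i \<in> I" "i \<noteq> ks" using assms by auto
    then show "poly (f i) z \<notin> Q" using z by simp
  qed
  ultimately have "(\<Prod>i\<in>B. poly (f i) z) \<notin> Q"
    using maximal_prod_notin[OF Q(1), of B "\<lambda>i. poly (f i) z"] by blast
  moreover have "poly (\<Prod>i\<in>B. f i) z \<in> Q" using val_in_fd Q(2) by blast
  ultimately show False by (simp add: poly_prod)
qed

lemma Lambda_sub_of_dvd:
  assumes "A \<subseteq> I" "\<forall>z. c dvd poly (\<Prod>i\<in>A. f i) z"
  shows "Lambda \<subseteq> A"
proof
  fix i assume "i \<in> Lambda"
  then obtain P where P: "P \<in> PP" "i \<in> Lam P" by blast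
  then obtain z where z: "\<forall>j\<in>I. j \<noteq> i \<longrightarrow> poly (f j) z \<notin> P" using indisp[OF P] by blast
  show "i \<in> A"
  proof (rule ccontr)
    assume "i \<notin> A"
    have "finite A" using assms(1) finI finite_subset by blast
    moreover have "\<forall>j\<in>A. poly (f j) z \<notin> P"
    proof
      fix j assume "j \<in> A"
      then have "j \<in> I" "j \<noteq> i" using assms(1) \<open>i \<notin> A\<close> by auto
      then show "poly (f j) z \<notin> P" using z by simp
    qed
    moreover have "maximal_ideal P" using P(1) by blast
    ultimately have "(\<Prod>j\<in>A. poly (f j) z) \<notin> P"
      using maximal_prod_notin[of P A "\<lambda>j. poly (f j) z"] by blast
    moreover obtain r where "poly (\<Prod>j\<in>A. f j) z = c * r" using assms(2) by (auto elim: dvdE)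
    moreover have "c * r \<in> P" using ideal_neg[of P c r] P(1) maximal_is_ideal by (auto simp: mult.commute)
    ultimately show False by (simp add: poly_prod)
  qed
qed

lemma phi_prime: "i \<in> I \<Longrightarrow> prime_elem (phi i)"
  by (rule field_poly_irreducible_imp_prime) (use irr in blast)

lemma phi_nz: "i \<in> I \<Longrightarrow> phi i \<noteq> 0"
  using phi_prime not_prime_elem_zero by metis

lemma Phi_eq: "Phi S = prod phi S" by (rule fract_prod)

lemma Phi_nz: "S \<subseteq> I \<Longrightarrow> Phi S \<noteq> 0"
proof -
  assume S: "S \<subseteq> I"
  then have "finite S" using finI finite_subset by blast
  moreover have "\<forall>i\<in>S. phi i \<noteq> 0" using S phi_nz by blast
  ultimately show "Phi S \<noteq> 0" unfolding Phi_eq by (simp add: prod_zero_iff)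
qed

lemma Phi_deg:
  assumes "S \<subseteq> I" "S \<noteq> {}" shows "degree (Phi S) > 0"
proof -
  have fin: "finite S" using assms finI finite_subset by blast
  have "degree (Phi S) = (\<Sum>i\<in>S. degree (phi i))"
    unfolding Phi_eq using phi_nz assms by (subst degree_prod_eq_sum_degree) auto
  moreover obtain i where "i \<in> S" using assms by blast
  moreover have "degree (phi i) > 0" using prime_poly_deg phi_prime \<open>i \<in> S\<close> assms by blast
  ultimately have "(\<Sum>i\<in>S. degree (phi i)) \<noteq> 0" using fin by (simp add: sum_eq_0_iff) blast
  then show ?thesis using \<open>degree (Phi S) = _\<close> by simp
qed

lemma Phi_nonunit:
  assumes "S \<subseteq> I" "S \<noteq> {}" "\<kappa> \<noteq> 0" shows "\<not> IntD_unit (smult \<kappa> (Phi S))"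
proof
  assume "IntD_unit (smult \<kappa> (Phi S))"
  then have "degree (smult \<kappa> (Phi S)) = 0" by (rule IntD_unit_deg)
  then show False using Phi_deg[OF assms(1,2)] assms(3) by simp
qed

lemma Phi_split:
  assumes "B \<subseteq> S" "S \<subseteq> I" shows "Phi S = Phi (S - B) * Phi B"
proof -
  have "finite S" using assms finI finite_subset by blast
  then have "(\<Prod>i\<in>S. f i) = (\<Prod>i\<in>S - B. f i) * (\<Prod>i\<in>B. f i)" using prod.subset_diff[OF assms(1)] by simp
  then show ?thesis by simp
qed

lemma core:
  assumes S: "S \<subseteq> I" and B: "B \<subseteq> S" and ksB: "ks \<notin> B"
    and a: "a \<in> IntD" and b: "b \<in> IntD"
    and ab: "a * b = smult ic (Phi S)" and bB: "b = smult \<beta> (Phi B)"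
  obtains e where "e dvd 1" "\<beta> = to_fract e" "a = smult (inverse (to_fract (c * e))) (Phi (S - B))"
           "fixed_divisor (\<Prod>i\<in>S - B. f i) = principal_ideal c" "Lambda \<subseteq> S - B"
proof -
  have BI: "B \<subseteq> I" using S B by blast
  have SBI: "S - B \<subseteq> I" using S by blast
  have "\<beta> \<in> range to_fract" using smult_beta[of \<beta> "\<Prod>i\<in>B. f i"] b bB one_in_fd[OF BI ksB] by simp
  then obtain e where e: "\<beta> = to_fract e" by blast
  have "a * b \<noteq> 0" using ab Phi_nz[OF S] c_nz by simp
  then have "b \<noteq> 0" by auto
  then have enz: "e \<noteq> 0" using bB e by auto
  have "Phi B * smult \<beta> a = Phi B * smult ic (Phi (S - B))"
    using ab Phi_split[OF B S] bB by (simp add: ac_simps)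
  then have "smult \<beta> a = smult ic (Phi (S - B))" using Phi_nz[OF BI] mult_cancel_left by blast
  then have "smult (inverse \<beta>) (smult \<beta> a) = smult (inverse \<beta>) (smult ic (Phi (S - B)))" by simp
  then have aeq: "a = smult (inverse (to_fract (c * e))) (Phi (S - B))"
    using enz e by (simp add: field_simps)
  have ce: "c * e \<noteq> 0" using c_nz enz by simp
  have dv: "\<forall>z. c * e dvd poly (\<Prod>i\<in>S - B. f i) z" using a aeq smult_inv_IntD_iff[OF ce] by simp
  have "c \<in> principal_ideal (c * e)" using c_in_fd[OF SBI] fd_sub_principal[OF dv] by blast
  then have "c * e dvd c * 1" by (simp add: principal_mem)
  then have eu: "e dvd 1" using c_nz dvd_mult_cancel_left by blast
  have dvc: "\<forall>z. c dvd poly (\<Prod>i\<in>S - B. f i) z" using dv dvd_mult_left by blast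
  have fdS: "fixed_divisor (\<Prod>i\<in>S - B. f i) = principal_ideal c"
    using fd_sub_principal[OF dvc] principal_sub[OF fd_ideal c_in_fd[OF SBI]] by blast
  have "Lambda \<subseteq> S - B" using Lambda_sub_of_dvd[OF SBI dvc] .
  from that[OF eu e aeq fdS this] show ?thesis .
qed

lemma const_mult: "[:\<alpha>:] * b = smult \<alpha> b"
  by simp

lemma unit_factor_IntD:
  assumes j: "j \<in> I" "j \<notin> Lambda" and a: "a \<in> IntD" and b: "b \<in> IntD"
    and ab: "phi j = a * b" and ua: "is_unit a"
  shows "IntD_unit a"
proof -
  obtain \<alpha> where al: "a = [:\<alpha>:]" "\<alpha> dvd 1" using ua by (auto simp: is_unit_poly_iff)
  have "poly a (to_fract 0) \<in> range to_fract" using a unfolding IntD_def by blast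
  then obtain d where d: "\<alpha> = to_fract d" using al by auto
  have "\<alpha> \<noteq> 0" using al by auto
  then have dnz: "d \<noteq> 0" using d by auto
  have "phi j = smult \<alpha> b" using ab al by simp
  then have "b = smult (inverse (to_fract d)) (phi j)" using d dnz by simp
  then have dv: "\<forall>z. d dvd poly (f j) z" using b smult_inv_IntD_iff[OF dnz] by simp
  have "ks \<noteq> j" using ks_Lambda j by blast
  then have "1 \<in> fixed_divisor (\<Prod>i\<in>{j}. f i)" using one_in_fd[of "{j}"] j by blast
  then have "1 \<in> principal_ideal d" using fd_sub_principal[OF dv] by auto
  then have "d dvd 1" by (simp add: principal_mem)
  then show ?thesis using const_IntD_unit al d by blast
qed

lemma phi_IntD_irr:
  assumes j: "j \<in> I" "j \<notin> Lambda"
  shows "IntD_irreducible (phi j)"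
  unfolding IntD_irreducible_def
proof (intro conjI ballI impI)
  show "phi j \<in> IntD" by (rule fract_IntD)
  show "phi j \<noteq> 0" using phi_nz j by blast
  show "\<not> IntD_unit (phi j)"
    using IntD_unit_deg[of "phi j"] prime_poly_deg[OF phi_prime[OF j(1)]] by auto
next
  fix a b assume ab: "a \<in> IntD" "b \<in> IntD" "phi j = a * b"
  have "irreducible (phi j)" using irr j by blast
  then have "is_unit a \<or> is_unit b" using ab(3) irreducibleD by blast
  then show "IntD_unit a \<or> IntD_unit b"
  proof
    assume "is_unit a" then show ?thesis using unit_factor_IntD[OF j ab] by blast
  next
    assume "is_unit b" then show ?thesis using unit_factor_IntD[OF j ab(2,1)] ab(3) by (simp add: mult.commute)
  qed
qed

lemma smult_one_const: "smult k (Phi {}) = [:k:]"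
  by simp

lemma part1:
  assumes cs: "candidate_split c f I Lambda J1 J2 js"
  shows "IntD_factorization (smult ic (Phi I)) (candidate_expr c f Lambda J1 js)"
proof -
  define S where "S = Lambda \<union> J1"
  have SI: "S \<subseteq> I" and J2I: "J2 \<subseteq> I" and dS: "fixed_divisor (\<Prod>i\<in>S. f i) = principal_ideal c"
    and mn: "\<forall>J'. J' \<subset> J1 \<longrightarrow> fixed_divisor (\<Prod>i\<in>Lambda \<union> J'. f i) \<noteq> principal_ideal c"
    and djs: "distinct js" "set js = J2" and disj: "Lambda \<inter> J1 = {}" "Lambda \<inter> J2 = {}" "J1 \<inter> J2 = {}"
    and un: "Lambda \<union> J1 \<union> J2 = I"
    using cs unfolding candidate_split_def S_def by auto
  have finS: "finite S" using SI finI finite_subset by blast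
  have icnz: "ic \<noteq> 0" using c_nz by simp
  define G0 where "G0 = smult ic (Phi S)"
  have "\<forall>z. c dvd poly (\<Prod>i\<in>S. f i) z" using fd_principal_dvd[OF dS] by blast
  then have G0I: "G0 \<in> IntD" unfolding G0_def by (rule smult_inv_IntD_iff[OF c_nz, THEN iffD2])
  have Sne: "S \<noteq> {}" using Lambda_ne S_def by blast
  have G0irr: "IntD_irreducible G0"
    unfolding IntD_irreducible_def
  proof (intro conjI ballI impI)
    show "G0 \<in> IntD" by (rule G0I)
    show "G0 \<noteq> 0" unfolding G0_def using Phi_nz[OF SI] icnz by simp
    show "\<not> IntD_unit G0" unfolding G0_def using Phi_nonunit[OF SI Sne icnz] .
  next
    fix a b assume a: "a \<in> IntD" and b: "b \<in> IntD" and ab: "G0 = a * b"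
    have "a dvd smult ic (Phi S)" using ab G0_def by (metis dvd_triv_left)
    then have "a dvd Phi S" using dvd_smult_cancel[OF _ icnz] by blast
    then have "a dvd prod phi S" using Phi_eq[of S] by simp
    moreover have "\<forall>i\<in>S. prime_elem (phi i)"
    proof
      fix i assume "i \<in> S" then have "i \<in> I" using SI by blast
      then show "prime_elem (phi i)" by (rule phi_prime)
    qed
    ultimately obtain A \<alpha> where A: "A \<subseteq> S" "\<alpha> \<noteq> 0" "a = smult \<alpha> (prod phi A)"
      using dvd_prod_primes[OF finS, of phi a] by blast
    have aA: "a = smult \<alpha> (Phi A)" using A(3) Phi_eq by simp
    have AI: "A \<subseteq> I" using A SI by blast
    have "Phi A * smult \<alpha> b = Phi A * smult ic (Phi (S - A))"
      using ab[unfolded G0_def] Phi_split[OF A(1) SI] aA by (simp add: ac_simps)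
    then have "smult \<alpha> b = smult ic (Phi (S - A))" using Phi_nz[OF AI] mult_cancel_left by blast
    then have "smult (inverse \<alpha>) (smult \<alpha> b) = smult (inverse \<alpha>) (smult ic (Phi (S - A)))" by simp
    then have bB: "b = smult (ic / \<alpha>) (Phi (S - A))" using A(2) by (simp add: field_simps)
    show "IntD_unit a \<or> IntD_unit b"
    proof (cases "ks \<in> A")
      case True
      have "ks \<notin> S - A" using True by blast
      have ab2: "a * b = smult ic (Phi S)" using ab unfolding G0_def by simp
      obtain e where e: "e dvd 1" "ic / \<alpha> = to_fract e" "a = smult (inverse (to_fract (c * e))) (Phi (S - (S - A)))"
        "fixed_divisor (\<Prod>i\<in>S - (S - A). f i) = principal_ideal c" "Lambda \<subseteq> S - (S - A)"
        by (rule core[of S "S - A" a b "ic / \<alpha>", OF SI Diff_subset \<open>ks \<notin> S - A\<close> a b ab2 bB])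
      have SSA: "S - (S - A) = A" using A(1) by blast
      define J' where "J' = A \<inter> J1"
      have LJ': "Lambda \<union> J' = A" using e(5) SSA A(1) unfolding J'_def S_def by blast
      have "\<not> J' \<subset> J1"
      proof
        assume "J' \<subset> J1"
        then have "fixed_divisor (\<Prod>i\<in>Lambda \<union> J'. f i) \<noteq> principal_ideal c" using mn by blast
        then show False using e(4) SSA LJ' by simp
      qed
      then have "J1 \<subseteq> A" unfolding J'_def by blast
      then have "S - A = {}" using e(5) SSA unfolding S_def by blast
      then have "Phi (S - A) = 1" by (simp only: prod.empty fract_poly_1)
      then have "b = [:to_fract e:]" using bB e(2) by simp
      then show ?thesis using const_IntD_unit[OF e(1)] by simp
    next
      case False
      have ab': "b * a = smult ic (Phi S)" using ab G0_def by (simp add: mult.commute)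
      obtain e where e: "e dvd 1" "\<alpha> = to_fract e" "b = smult (inverse (to_fract (c * e))) (Phi (S - A))"
        "fixed_divisor (\<Prod>i\<in>S - A. f i) = principal_ideal c" "Lambda \<subseteq> S - A"
        by (rule core[of S A b a \<alpha>, OF SI A(1) False b a ab' aA])
      define J' where "J' = J1 - A"
      have LJ': "Lambda \<union> J' = S - A" using e(5) unfolding J'_def S_def by blast
      have "\<not> J' \<subset> J1"
      proof
        assume "J' \<subset> J1"
        then have "fixed_divisor (\<Prod>i\<in>Lambda \<union> J'. f i) \<noteq> principal_ideal c" using mn by blast
        then show False using e(4) LJ' by simp
      qed
      then have "J1 \<inter> A = {}" unfolding J'_def by blast
      then have "A = {}" using e(5) A(1) unfolding S_def by blast
      then have "Phi A = 1" by (simp only: prod.empty fract_poly_1)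
      then have "a = [:to_fract e:]" using aA e(2) by simp
      then show ?thesis using const_IntD_unit[OF e(1)] by simp
    qed
  qed
  have js_irr: "\<forall>j\<in>set js. IntD_irreducible (phi j)"
    using phi_IntD_irr djs(2) J2I disj(2) by blast
  have "I - J2 = S" using un disj unfolding S_def by blast
  then have "Phi I = Phi S * Phi J2" using Phi_split[OF J2I subset_refl] by simp
  moreover have "prod_list (map phi js) = Phi J2"
    using prod.distinct_set_conv_list[OF djs(1), of phi] djs(2) Phi_eq by simp
  ultimately have "prod_list (candidate_expr c f Lambda J1 js) = smult ic (Phi I)"
    unfolding candidate_expr_def S_def by (simp add: mult_smult_left)
  then show ?thesis unfolding IntD_factorization_def candidate_expr_def
    using G0irr js_irr unfolding G0_def S_def by auto
qed

lemma singleton_factor: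
  assumes k: "k < length xs" and irrx: "IntD_irreducible (xs ! k)"
    and AkI: "Ak \<subseteq> I" and e: "e dvd 1" and xk: "xs ! k = smult (to_fract e) (Phi Ak)"
  shows "\<exists>j. Ak = {j}"
proof -
  have enz: "to_fract e \<noteq> 0" using e by auto
  have nu: "\<not> IntD_unit (xs ! k)" and irr2: "\<forall>a\<in>IntD. \<forall>b\<in>IntD. xs ! k = a * b \<longrightarrow> IntD_unit a \<or> IntD_unit b"
    using irrx unfolding IntD_irreducible_def by blast+
  have "Ak \<noteq> {}"
  proof
    assume "Ak = {}"
    then have "Phi Ak = 1" by (simp only: prod.empty fract_poly_1)
    then have "xs ! k = [:to_fract e:]" using xk by simp
    then show False using nu const_IntD_unit[OF e] by simp
  qed
  then obtain j where j: "j \<in> Ak" by blast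
  show ?thesis
  proof (cases "Ak = {j}")
    case False
    have s1: "{j} \<subseteq> Ak" using j by blast
    have "Phi Ak = Phi (Ak - {j}) * Phi {j}" using Phi_split[OF s1 AkI] .
    then have eq: "xs ! k = smult (to_fract e) (Phi {j}) * Phi (Ak - {j})" using xk by (simp add: ac_simps)
    have "smult (to_fract e) (Phi {j}) = map_poly to_fract (smult e (\<Prod>i\<in>{j}. f i))" by simp
    then have i1: "smult (to_fract e) (Phi {j}) \<in> IntD" using fract_IntD by metis
    have i2: "Phi (Ak - {j}) \<in> IntD" by (rule fract_IntD)
    have n1: "\<not> IntD_unit (smult (to_fract e) (Phi {j}))" using Phi_nonunit[of "{j}" "to_fract e"] j AkI enz by blast
    have "Ak - {j} \<noteq> {}" using False j by blast
    moreover have "Ak - {j} \<subseteq> I" using AkI by blast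
    ultimately have "\<not> IntD_unit (smult 1 (Phi (Ak - {j})))" using Phi_nonunit[of "Ak - {j}" 1] by simp
    then have n2: "\<not> IntD_unit (Phi (Ak - {j}))" by simp
    show ?thesis using irr2 i1 i2 eq n1 n2 by blast
  qed simp
qed

lemma part2:
  assumes fac: "IntD_factorization (smult ic (Phi I)) xs"
  shows "\<exists>J1 J2 js. candidate_split c f I Lambda J1 J2 js \<and> ess_same xs (candidate_expr c f Lambda J1 js)"
proof -
  define n where "n = length xs"
  have irrx: "\<forall>k<n. IntD_irreducible (xs ! k)" using fac unfolding IntD_factorization_def n_def by auto
  have xI: "\<forall>k<n. xs ! k \<in> IntD" using irrx unfolding IntD_irreducible_def by blast
  have px: "prod_list xs = smult ic (Phi I)" using fac unfolding IntD_factorization_def by blast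
  have icnz: "ic \<noteq> 0" using c_nz by simp
  have primes: "\<forall>i\<in>I. prime_elem (phi i)" using phi_prime by blast
  have px2: "prod_list xs = smult ic (prod phi I)" using px Phi_eq[of I] by simp
  obtain A lm where A: "\<forall>k<n. A k \<subseteq> I \<and> lm k \<noteq> 0 \<and> xs!k = smult (lm k) (prod phi (A k))"
    and dA: "\<forall>k<n. \<forall>l<n. k \<noteq> l \<longrightarrow> A k \<inter> A l = {}" and uA: "(\<Union>k<n. A k) = I"
    using list_factor[OF finI primes px2 icnz] unfolding n_def by blast
  have AI: "A k \<subseteq> I" if "k < n" for k using A that by blast
  have xk: "xs ! k = smult (lm k) (Phi (A k))" if "k < n" for k using A that Phi_eq[of "A k"] by simp
  obtain k0 where k0: "k0 < n" "ks \<in> A k0" using uA ks_I by blast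
  define A0 where "A0 = A k0"
  define R where "R k = (\<Prod>j\<in>{..<n} - {k}. xs ! j)" for k
  have RI: "R k \<in> IntD" for k unfolding R_def by (rule IntD_prod) (use xI in auto)
  have Rprod: "R k * xs ! k = smult ic (Phi I)" if "k < n" for k
  proof -
    have "prod_list xs = prod ((!) xs) {0..<n}" unfolding n_def by (rule prod.list_conv_set_nth)
    also have "\<dots> = xs ! k * prod ((!) xs) ({..<n} - {k})"
      using that by (simp add: atLeast0LessThan prod.remove)
    finally show ?thesis using px unfolding R_def by (simp add: mult.commute)
  qed
  have other: "\<exists>p. k < n \<and> k \<noteq> k0 \<longrightarrow> A k = {fst p} \<and> snd p dvd 1 \<and> xs ! k = [:to_fract (snd p):] * phi (fst p)" for k
  proof (cases "k < n \<and> k \<noteq> k0")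
    case True
    then have ksk: "ks \<notin> A k" using dA k0 by blast
    obtain e where e: "e dvd 1" "lm k = to_fract e" "R k = smult (inverse (to_fract (c * e))) (Phi (I - A k))"
        "fixed_divisor (\<Prod>i\<in>I - A k. f i) = principal_ideal c" "Lambda \<subseteq> I - A k"
      by (rule core[of I "A k" "R k" "xs ! k" "lm k", OF subset_refl AI[of k] ksk RI xI[rule_format] Rprod xk])
        (use True in auto)
    have xk2: "xs ! k = smult (to_fract e) (Phi (A k))" using xk[of k] True e(2) by simp
    obtain j where j: "A k = {j}" using singleton_factor[of k xs "A k" e] True irrx AI e(1) xk2 unfolding n_def by blast
    have "xs ! k = [:to_fract e:] * phi j" using xk2 j by simp
    then show ?thesis using j e(1) by (intro exI[of _ "(j, e)"]) simp
  qed blast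
  obtain g where g: "\<forall>k. k < n \<and> k \<noteq> k0 \<longrightarrow> A k = {fst (g k)} \<and> snd (g k) dvd 1 \<and> xs ! k = [:to_fract (snd (g k)):] * phi (fst (g k))"
    using choice[of "\<lambda>k p. k < n \<and> k \<noteq> k0 \<longrightarrow> A k = {fst p} \<and> snd p dvd 1 \<and> xs ! k = [:to_fract (snd p):] * phi (fst p)"] other
    by blast
  define jf where "jf k = fst (g k)" for k
  define ef where "ef k = snd (g k)" for k
  have JF: "A k = {jf k}" "ef k dvd 1" "xs ! k = [:to_fract (ef k):] * phi (jf k)" if "k < n" "k \<noteq> k0" for k
    using g that unfolding jf_def ef_def by blast+
  have A0I: "A0 \<subseteq> I" using AI k0 unfolding A0_def by blast
  have Phi_nzA0: "Phi A0 \<noteq> 0" using Phi_nz[OF A0I] .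
  have lmnz: "lm k0 \<noteq> 0" using A k0 by blast
  have "Phi A0 * smult (lm k0) (R k0) = Phi A0 * smult ic (Phi (I - A0))"
    using Rprod[OF k0(1)] xk[OF k0(1)] Phi_split[OF A0I subset_refl] unfolding A0_def by (simp add: ac_simps)
  then have "smult (lm k0) (R k0) = smult ic (Phi (I - A0))" using Phi_nzA0 mult_cancel_left by blast
  then have "smult (inverse (lm k0)) (smult (lm k0) (R k0)) = smult (inverse (lm k0)) (smult ic (Phi (I - A0)))" by simp
  then have R0: "R k0 = smult (ic / lm k0) (Phi (I - A0))" using lmnz by (simp add: field_simps)
  have ks0: "ks \<notin> I - A0" using k0 unfolding A0_def by blast
  have Rprod0: "xs ! k0 * R k0 = smult ic (Phi I)" using Rprod[OF k0(1)] by (simp add: mult.commute)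
  obtain e0 where e0: "e0 dvd 1" "ic / lm k0 = to_fract e0" "xs ! k0 = smult (inverse (to_fract (c * e0))) (Phi (I - (I - A0)))"
      "fixed_divisor (\<Prod>i\<in>I - (I - A0). f i) = principal_ideal c" "Lambda \<subseteq> I - (I - A0)"
    by (rule core[of I "I - A0" "xs ! k0" "R k0" "ic / lm k0", OF subset_refl Diff_subset ks0 xI[rule_format, OF k0(1)] RI Rprod0 R0])
  have IIA: "I - (I - A0) = A0" using A0I by blast
  have x0: "xs ! k0 = smult (inverse (to_fract (c * e0))) (Phi A0)" using e0(3) IIA by simp
  have fd0: "fixed_divisor (\<Prod>i\<in>A0. f i) = principal_ideal c" using e0(4) IIA by simp
  have LA0: "Lambda \<subseteq> A0" using e0(5) IIA by simp
  obtain e0' where e0': "1 = e0 * e0'" using e0(1) by (auto elim: dvdE)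
  have ce0: "c * e0 \<noteq> 0" using c_nz e0' by auto
  define J1 where "J1 = A0 - Lambda"
  define J2 where "J2 = I - A0"
  define L where "L = Lfront k0 n"
  define js where "js = map jf L"
  have LJ1: "Lambda \<union> J1 = A0" using LA0 unfolding J1_def by blast
  have setL: "set L = {..<n} - {k0}" unfolding L_def using Lfront_set[OF k0(1)] .
  have lenL: "length L = n - 1" unfolding L_def using Lfront_length[OF k0(1)] .
  have irr0: "IntD_irreducible (xs ! k0)" using irrx k0 by blast
  have minimal: "\<forall>J'. J' \<subset> J1 \<longrightarrow> fixed_divisor (\<Prod>i\<in>Lambda \<union> J'. f i) \<noteq> principal_ideal c"
  proof (intro allI impI notI)
    fix J' assume J': "J' \<subset> J1" and fdJ: "fixed_divisor (\<Prod>i\<in>Lambda \<union> J'. f i) = principal_ideal c"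
    define B1 where "B1 = Lambda \<union> J'"
    define B2 where "B2 = J1 - J'"
    have B2A0: "B2 \<subseteq> A0" unfolding B2_def J1_def by blast
    have "A0 - B2 = B1" using J' LA0 unfolding B1_def B2_def J1_def by blast
    then have "Phi A0 = Phi B1 * Phi B2" using Phi_split[OF B2A0 A0I] by simp
    then have eq: "xs ! k0 = smult (inverse (to_fract (c * e0))) (Phi B1) * Phi B2" using x0 by simp
    have B1I: "B1 \<subseteq> I" using LA0 A0I J' unfolding B1_def J1_def by blast
    have "\<forall>z. c * e0 dvd poly (\<Prod>i\<in>B1. f i) z"
    proof
      fix z
      obtain r where r: "poly (\<Prod>i\<in>B1. f i) z = c * r" using fd_principal_dvd[OF fdJ[folded B1_def], of z] by (auto elim: dvdE)
      have "c * r = c * e0 * (e0' * r)" using e0' by (metis mult.assoc mult_1_left mult.commute)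
      then show "c * e0 dvd poly (\<Prod>i\<in>B1. f i) z" using r by (metis dvdI)
    qed
    then have i1: "smult (inverse (to_fract (c * e0))) (Phi B1) \<in> IntD"
      by (rule smult_inv_IntD_iff[OF ce0, THEN iffD2])
    have i2: "Phi B2 \<in> IntD" by (rule fract_IntD)
    have B1ne: "B1 \<noteq> {}" using Lambda_ne unfolding B1_def by blast
    have n1: "\<not> IntD_unit (smult (inverse (to_fract (c * e0))) (Phi B1))"
      using Phi_nonunit[OF B1I B1ne] ce0 by simp
    have B2ne: "B2 \<noteq> {}" using J' unfolding B2_def by blast
    have B2I: "B2 \<subseteq> I" using B2A0 A0I by blast
    have "\<not> IntD_unit (smult 1 (Phi B2))" using Phi_nonunit[OF B2I B2ne, of 1] by simp
    then have n2: "\<not> IntD_unit (Phi B2)" by simp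
    show False using irr0 i1 i2 eq n1 n2 unfolding IntD_irreducible_def by blast
  qed
  have jfA: "jf k \<in> A k" if "k \<in> set L" for k using JF(1)[of k] that setL by auto
  have inj: "inj_on jf (set L)"
  proof (rule inj_onI)
    fix k l assume kl: "k \<in> set L" "l \<in> set L" "jf k = jf l"
    show "k = l"
    proof (rule ccontr)
      assume "k \<noteq> l"
      then have "A k \<inter> A l = {}" using dA kl setL by auto
      moreover have "jf k \<in> A k" "jf l \<in> A l" using jfA[OF kl(1)] jfA[OF kl(2)] by auto
      ultimately show False using kl(3) by auto
    qed
  qed
  have djs: "distinct js" unfolding js_def L_def using inj Lfront_distinct L_def by (simp add: distinct_map)
  have sjs: "set js = J2"
  proof
    show "set js \<subseteq> J2"
    proof
      fix i assume "i \<in> set js"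
      then obtain k where k: "k \<in> set L" "i = jf k" unfolding js_def by auto
      then have "k < n" "k \<noteq> k0" using setL by auto
      then have "i \<in> A k" "A k \<inter> A0 = {}" using k jfA dA k0 unfolding A0_def by auto
      then show "i \<in> J2" using AI[OF \<open>k < n\<close>] unfolding J2_def by blast
    qed
  next
    show "J2 \<subseteq> set js"
    proof
      fix i assume "i \<in> J2"
      then obtain k where k: "k < n" "i \<in> A k" using uA unfolding J2_def by blast
      have "k \<noteq> k0" using k \<open>i \<in> J2\<close> unfolding J2_def A0_def by blast
      then have "i = jf k" using JF(1)[OF k(1)] k by blast
      moreover have "k \<in> set L" using setL k \<open>k \<noteq> k0\<close> by blast
      ultimately show "i \<in> set js" unfolding js_def by simp
    qed
  qed
  have cs: "candidate_split c f I Lambda J1 J2 js"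
    unfolding candidate_split_def
    using LJ1 A0I LA0 fd0 minimal djs sjs unfolding J1_def J2_def by auto
  define cand where "cand = candidate_expr c f Lambda J1 js"
  have cand0: "cand ! 0 = smult ic (Phi A0)" unfolding cand_def candidate_expr_def using LJ1 by simp
  have candS: "cand ! (Suc k) = phi (jf (L ! k))" if "k < length L" for k
    unfolding cand_def candidate_expr_def js_def using that by simp
  have lencand: "length cand = n" unfolding cand_def candidate_expr_def js_def using lenL k0 by simp
  define \<sigma> where "\<sigma> k = (if k = k0 then 0 else if k < k0 then Suc k else k)" for k
  have perm: "\<sigma> permutes {..<n}" unfolding \<sigma>_def by (rule perm_front[OF k0(1)])
  have units: "\<exists>u. IntD_unit u \<and> xs ! k = u * cand ! (\<sigma> k)" if "k < n" for k
  proof (cases "k = k0")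
    case True
    have "to_fract e0 * to_fract e0' = 1" using e0' by (metis to_fract_1 to_fract_mult)
    then have inv: "inverse (to_fract e0) = to_fract e0'" by (rule inverse_unique)
    have "inverse (to_fract (c * e0)) = to_fract e0' * ic" using inv by (simp add: inverse_mult_distrib)
    then have "xs ! k = [:to_fract e0':] * cand ! (\<sigma> k)" using True x0 cand0 inv unfolding \<sigma>_def by (simp add: mult.commute)
    moreover have "IntD_unit [:to_fract e0':]" using const_IntD_unit[of e0'] e0' by (metis dvd_triv_right)
    ultimately show ?thesis by blast
  next
    case False
    show ?thesis
    proof (cases "k < k0")
      case True
      have "k < length L" using True k0 lenL by simp
      then have "cand ! (\<sigma> k) = phi (jf k)" using candS[of k] True False Lfront_nth1[OF True] unfolding \<sigma>_def L_def by simp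
      then show ?thesis using JF[OF that False] const_IntD_unit by metis
    next
      case False2: False
      then have gt: "k0 < k" using False by simp
      have "k - 1 < length L" using gt that lenL by simp
      moreover have "Suc (k - 1) = k" using gt by simp
      ultimately have "cand ! k = phi (jf (L ! (k - 1)))" using candS[of "k - 1"] by simp
      then have "cand ! (\<sigma> k) = phi (jf k)" using Lfront_nth2[OF gt that] False False2 unfolding \<sigma>_def L_def by simp
      then show ?thesis using JF[OF that False] const_IntD_unit by metis
    qed
  qed
  have "ess_same xs cand"
    unfolding ess_same_def using lencand perm units unfolding n_def by auto
  then show ?thesis using cs unfolding cand_def by blast
qed

end

theorem lemma3p7:
  fixes c :: "'a::idom"
    and I :: "'i set"
    and f :: "'i \<Rightarrow> 'a poly"
    and Lam :: "'a set \<Rightarrow> 'i set"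
  assumes ded: "dedekind_domain TYPE('a)"
    and finI: "finite I" and neI: "I \<noteq> {}"
    and irr: "\<forall>i\<in>I. irreducible (map_poly to_fract (f i))"
    and c_nonunit: "\<not> c dvd 1" and c_nz: "c \<noteq> 0"
    and dfix: "fixed_divisor (\<Prod>i\<in>I. f i) = principal_ideal c"
    and LamP: "\<forall>P\<in>{P. maximal_ideal P \<and> c \<in> P}.
                 Lam P \<subseteq> I \<and> (\<forall>k\<in>Lam P. indispensable P f I k)"
    and inter: "(\<Inter>P\<in>{P. maximal_ideal P \<and> c \<in> P}. Lam P) \<noteq> {}"
  defines "Lambda \<equiv> (\<Union>P\<in>{P. maximal_ideal P \<and> c \<in> P}. Lam P)"
    and "F \<equiv> smult (inverse (to_fract c)) (map_poly to_fract (\<Prod>i\<in>I. f i))"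
  shows "(\<forall>J1 J2 js. candidate_split c f I Lambda J1 J2 js \<longrightarrow> IntD_factorization F (candidate_expr c f Lambda J1 js)) \<and>
         (\<forall>xs. IntD_factorization F xs \<longrightarrow>
            (\<exists>J1 J2 js. candidate_split c f I Lambda J1 J2 js \<and> ess_same xs (candidate_expr c f Lambda J1 js)))"
proof -
  interpret L37 c I f Lam
    using finI irr c_nonunit c_nz dfix LamP inter by unfold_locales
  show ?thesis unfolding Lambda_def F_def using part1 part2 by blast
qed

end
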